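(* Let $G=\bigl((f_j)_{j=1}^n;(\mu^{R})_{\emptyset\ne R\subseteq[n]}\bigr)$ be an $n$-resource selection game, and treat $\mathrm{undefined}$ as $-\infty$ in maxima. (a) $\max_{\emptyset\ne S\subseteq[n]}E_G(S)$ is a real number. (b) If $f_1,\ldots,f_n$ are continuous, then $h_G=\max_{\emptyset\ne S\subseteq[n]}E_G(S)$.
   Context: An $n$-resource selection game is $G=\bigl((f_j)_{j=1}^n;(\mu^{R})_{\emptyset\ne R\subseteq[n]}\bigr)$ with each $f_j:[0,\infty)\to\mathbb{R}$ nondecreasing and each $\mu^R\ge0$. Equalization: for nondecreasing $g_1,\ldots,g_m:[0,\infty)\to\mathbb{R}\cup\{\mathrm{undefined}\}$, $\mathrm{eq}(g_1,\ldots,g_m)(\mu)=g_1(\mu_1)$ if there exist $\mu_1,\ldots,\mu_m\ge0$ summing to $\mu$ with $g_1(\mu_1)=\cdots=g_m(\mu_m)\in\mathbb{R}$, else $\mathrm{undefined}$. For nonempty $S\subseteq[n]$: $E_G(S)=\mathrm{eq}(f_k:k\in S)\bigl(\sum_{\emptyset\ne R\subseteq S}\mu^R\bigr)$; $M_G(S)$ is the set of nonempty $S'\subseteq S$ such that for every $0\le\mu\le\sum_{R\subseteq S,\,R\cap S'\ne\emptyset}\mu^R$, $\mathrm{eq}(f_k:k\in S')(\mu)\ne E_G(S)$ ($\mathrm{undefined}$ differs from every real); $D_G=\{S: E_G(S)\in\mathbb{R},\ M_G(S)=\emptyset\}$; $h_G=\max_{S\in D_G}E_G(S)$. *)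

theory Defs
  imports "HOL-Analysis.Analysis"
begin

text \<open>A game with n resources: cost functions f j (j in {1..n}) and masses mu R
  for nonempty R subset of {1..n}.  'undefined' values are modelled by None.\<close>

definition rsg_game :: "nat \<Rightarrow> (nat \<Rightarrow> real \<Rightarrow> real) \<Rightarrow> (nat set \<Rightarrow> real) \<Rightarrow> bool" where
  "rsg_game n f mu \<longleftrightarrow>
     (\<forall>j\<in>{1..n}. mono_on {0..} (f j)) \<and>
     (\<forall>R. R \<noteq> {} \<longrightarrow> R \<subseteq> {1..n} \<longrightarrow> mu R \<ge> 0)"

definition eq_profile :: "(nat \<Rightarrow> real \<Rightarrow> real) \<Rightarrow> nat set \<Rightarrow> real \<Rightarrow> real \<Rightarrow> bool" where
  "eq_profile f S m c \<longleftrightarrow>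
     (\<exists>x. (\<forall>k\<in>S. x k \<ge> 0) \<and> (\<Sum>k\<in>S. x k) = m \<and> (\<forall>k\<in>S. f k (x k) = c))"

definition eqz :: "(nat \<Rightarrow> real \<Rightarrow> real) \<Rightarrow> nat set \<Rightarrow> real \<Rightarrow> real option" where
  "eqz f S m = (if \<exists>c. eq_profile f S m c then Some (THE c. eq_profile f S m c) else None)"

definition E_G :: "(nat \<Rightarrow> real \<Rightarrow> real) \<Rightarrow> (nat set \<Rightarrow> real) \<Rightarrow> nat set \<Rightarrow> real option" where
  "E_G f mu S = eqz f S (\<Sum>R\<in>{R. R \<noteq> {} \<and> R \<subseteq> S}. mu R)"

definition M_G :: "(nat \<Rightarrow> real \<Rightarrow> real) \<Rightarrow> (nat set \<Rightarrow> real) \<Rightarrow> nat set \<Rightarrow> nat set set" where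
  "M_G f mu S = {S'. S' \<noteq> {} \<and> S' \<subseteq> S \<and>
     (\<forall>m. 0 \<le> m \<and> m \<le> (\<Sum>R\<in>{R. R \<subseteq> S \<and> R \<inter> S' \<noteq> {}}. mu R)
          \<longrightarrow> eqz f S' m \<noteq> E_G f mu S)}"

definition D_G :: "nat \<Rightarrow> (nat \<Rightarrow> real \<Rightarrow> real) \<Rightarrow> (nat set \<Rightarrow> real) \<Rightarrow> nat set set" where
  "D_G n f mu = {S. S \<noteq> {} \<and> S \<subseteq> {1..n} \<and> E_G f mu S \<noteq> None \<and> M_G f mu S = {}}"

definition ext_val :: "real option \<Rightarrow> ereal" where
  "ext_val v = (case v of None \<Rightarrow> -\<infinity> | Some c \<Rightarrow> ereal c)"

definition max_E :: "nat \<Rightarrow> (nat \<Rightarrow> real \<Rightarrow> real) \<Rightarrow> (nat set \<Rightarrow> real) \<Rightarrow> ereal" where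
  "max_E n f mu = Max ((\<lambda>S. ext_val (E_G f mu S)) ` {S. S \<noteq> {} \<and> S \<subseteq> {1..n}})"

definition h_G :: "nat \<Rightarrow> (nat \<Rightarrow> real \<Rightarrow> real) \<Rightarrow> (nat set \<Rightarrow> real) \<Rightarrow> ereal" where
  "h_G n f mu = Max ((\<lambda>S. ext_val (E_G f mu S)) ` D_G n f mu)"

end

theory Submission imports Defs begin
lemma compact_box:
  fixes S :: "nat \<Rightarrow> real set"
  assumes "\<And>k. compact (S k)"
  shows "compact {y::nat\<Rightarrow>real. \<forall>k. y k \<in> S k}"
proof -
  have "{y::nat\<Rightarrow>real. \<forall>k. y k \<in> S k} = PiE UNIV S" by (auto simp: PiE_def extensional_def)
  moreover have "compactin (product_topology (\<lambda>_. euclidean) UNIV) (PiE UNIV S)"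
    using assms by (simp add: compactin_PiE)
  ultimately show ?thesis by (simp add: euclidean_product_topology)
qed

lemma continuous_on_Min_fin:
  fixes g :: "nat \<Rightarrow> 'a::topological_space \<Rightarrow> real"
  assumes "finite T" "T \<noteq> {}" "\<And>k. k \<in> T \<Longrightarrow> continuous_on K (g k)"
  shows "continuous_on K (\<lambda>y. Min ((\<lambda>k. g k y) ` T))"
  using assms
proof (induction T rule: finite_ne_induct)
  case (singleton x)
  then show ?case by simp
next
  case (insert x F)
  have "(\<lambda>y. Min ((\<lambda>k. g k y) ` insert x F)) = (\<lambda>y. min (g x y) (Min ((\<lambda>k. g k y) ` F)))"
    using insert.hyps by (auto simp: Min_insert)
  then show ?case using insert by (auto intro!: continuous_on_min)
qed

lemma maxmin:
  fixes f :: "nat \<Rightarrow> real \<Rightarrow> real"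
  assumes fin: "finite T" and ne: "T \<noteq> {}"
    and cont: "\<forall>k\<in>T. continuous_on {0..} (f k)"
    and mon: "\<forall>k\<in>T. mono_on {0..} (f k)"
    and x: "\<forall>k\<in>T. 0 \<le> x k \<and> f k (x k) = c"
    and sm: "(\<Sum>k\<in>T. x k) \<le> m"
  shows "\<exists>ys v. (\<forall>k\<in>T. 0 \<le> ys k \<and> v \<le> f k (ys k)) \<and> (\<Sum>k\<in>T. ys k) = m \<and> c \<le> v \<and>
     (\<forall>y. (\<forall>k\<in>T. 0 \<le> y k) \<and> (\<Sum>k\<in>T. y k) = m \<longrightarrow> \<not> (\<forall>k\<in>T. v < f k (y k)))"
proof -
  define S where "S k = (if k \<in> T then {0..m} else {0::real})" for k
  define K where "K = {y::nat\<Rightarrow>real. \<forall>k. y k \<in> S k} \<inter> {y. (\<Sum>k\<in>T. y k) = m}"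
  define V where "V y = Min ((\<lambda>k. f k (y k)) ` T)" for y :: "nat \<Rightarrow> real"
  have "compact {y::nat\<Rightarrow>real. \<forall>k. y k \<in> S k}"
    by (rule compact_box) (auto simp: S_def)
  moreover have "closed {y::nat\<Rightarrow>real. (\<Sum>k\<in>T. y k) = m}"
  proof -
    have "continuous_on UNIV (\<lambda>y::nat\<Rightarrow>real. (\<Sum>k\<in>T. y k))"
      by (intro continuous_intros) auto
    from continuous_closed_preimage_constant[OF this closed_UNIV, of m] show ?thesis by simp
  qed
  ultimately have cK: "compact K" unfolding K_def by (rule compact_Int_closed)
  have Knn: "\<And>y k. y \<in> K \<Longrightarrow> k \<in> T \<Longrightarrow> 0 \<le> y k"
    by (auto simp: K_def S_def split: if_splits)
  have cV: "continuous_on K V" unfolding V_def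
  proof (rule continuous_on_Min_fin[OF fin ne])
    fix k assume k: "k \<in> T"
    have "continuous_on K (\<lambda>y::nat\<Rightarrow>real. y k)"
      by (rule continuous_on_subset[OF continuous_on_product_coordinates]) simp
    moreover have "(\<lambda>y. y k) ` K \<subseteq> {0..}" using Knn k by auto
    ultimately show "continuous_on K (\<lambda>y. f k (y k))"
      using continuous_on_compose2[of "{0..}" "f k" K "\<lambda>y. y k"] cont k by auto
  qed
  obtain k0 where k0: "k0 \<in> T" using ne by auto
  define x' where "x' k = (if k \<in> T then x k + (if k = k0 then m - (\<Sum>k\<in>T. x k) else 0) else 0)" for k
  have x'nn: "\<forall>k\<in>T. 0 \<le> x' k" using x sm by (auto simp: x'_def)
  have sx': "(\<Sum>k\<in>T. x' k) = m"
  proof -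
    have "(\<Sum>k\<in>T. x' k) = (\<Sum>k\<in>T. x k + (if k = k0 then m - (\<Sum>k\<in>T. x k) else 0))"
      by (auto simp: x'_def intro!: sum.cong)
    also have "\<dots> = (\<Sum>k\<in>T. x k) + (m - (\<Sum>k\<in>T. x k))"
      by (simp add: sum.distrib fin k0)
    finally show ?thesis by simp
  qed
  have x'K: "x' \<in> K"
  proof -
    have "x' k \<le> m" if "k \<in> T" for k
      using member_le_sum[of k T x', OF that] x'nn sx' fin by auto
    then show ?thesis using x'nn sx' by (auto simp: K_def S_def x'_def)
  qed
  have Vx': "c \<le> V x'"
    unfolding V_def
  proof (subst Min_ge_iff)
    show "\<forall>a\<in>(\<lambda>k. f k (x' k)) ` T. c \<le> a"
    proof
      fix a assume "a \<in> (\<lambda>k. f k (x' k)) ` T"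
      then obtain k where k: "k \<in> T" "a = f k (x' k)" by auto
      have "x k \<le> x' k" using k x sm by (auto simp: x'_def)
      moreover have "0 \<le> x k" using x k by auto
      moreover have mk: "mono_on {0..} (f k)" using mon k by blast
      ultimately have "f k (x k) \<le> f k (x' k)" by (intro mono_onD[OF mk]) (use x'nn k in auto)
      then show "c \<le> a" using k x by auto
    qed
  qed (use fin ne in auto)
  obtain ys where ys: "ys \<in> K" "\<forall>y\<in>K. V y \<le> V ys"
    using continuous_attains_sup[OF cK _ cV] x'K by blast
  define v where "v = V ys"
  show ?thesis
  proof (intro exI conjI allI impI ballI)
    fix k assume k: "k \<in> T"
    show "0 \<le> ys k" using Knn ys(1) k by auto
    show "v \<le> f k (ys k)" unfolding v_def V_def by (rule Min_le) (use fin k in auto)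
  next
    show "(\<Sum>k\<in>T. ys k) = m" using ys(1) by (auto simp: K_def)
    have "V x' \<le> V ys" using ys(2) x'K by blast
    then show "c \<le> v" using Vx' unfolding v_def by linarith
  next
    fix y assume y: "(\<forall>k\<in>T. 0 \<le> y k) \<and> (\<Sum>k\<in>T. y k) = m"
    show "\<not> (\<forall>k\<in>T. v < f k (y k))"
    proof
      assume gt: "\<forall>k\<in>T. v < f k (y k)"
      define y' where "y' k = (if k \<in> T then y k else 0)" for k
      have s': "(\<Sum>k\<in>T. y' k) = m" using y by (auto simp: y'_def)
      have "y' k \<le> m" if "k \<in> T" for k
        using member_le_sum[of k T y', OF that] y s' fin by (auto simp: y'_def)
      then have "y' \<in> K" using y s' by (auto simp: K_def S_def y'_def)
      moreover have "v < V y'" unfolding V_def by (subst Min_gr_iff) (use gt fin ne in \<open>auto simp: y'_def\<close>)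
      ultimately show False using ys(2) unfolding v_def by fastforce
    qed
  qed
qed

lemma exist_profile:
  fixes f :: "nat \<Rightarrow> real \<Rightarrow> real"
  assumes fin: "finite T" and ne: "T \<noteq> {}"
    and cont: "\<forall>k\<in>T. continuous_on {0..} (f k)"
    and mon: "\<forall>k\<in>T. mono_on {0..} (f k)"
    and x: "\<forall>k\<in>T. 0 \<le> x k \<and> f k (x k) = c"
    and sm: "(\<Sum>k\<in>T. x k) \<le> m"
  shows "\<exists>v y. c \<le> v \<and> (\<forall>k\<in>T. 0 \<le> y k \<and> f k (y k) = v) \<and> (\<Sum>k\<in>T. y k) = m"
proof -
  obtain ys v where ys: "\<forall>k\<in>T. 0 \<le> ys k \<and> v \<le> f k (ys k)" "(\<Sum>k\<in>T. ys k) = m" "c \<le> v"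
    and opt: "\<And>y. (\<forall>k\<in>T. 0 \<le> y k) \<Longrightarrow> (\<Sum>k\<in>T. y k) = m \<Longrightarrow> \<not> (\<forall>k\<in>T. v < f k (y k))"
    using maxmin[OF assms] by blast
  have m0: "0 \<le> m" using sm x sum_nonneg[of T x] by auto
  have mono': "f k a \<le> f k b" if "k \<in> T" "0 \<le> a" "a \<le> b" for k a b
  proof -
    have mk: "mono_on {0..} (f k)" using mon that by blast
    show ?thesis by (rule mono_onD[OF mk]) (use that in auto)
  qed
  have contk: "continuous_on {a..b} (f k)" if "k \<in> T" "0 \<le> a" for k a b
    using cont that continuous_on_subset by fastforce
  have "\<forall>k\<in>T. \<exists>w. 0 \<le> w \<and> w \<le> ys k \<and> f k w = v"
  proof
    fix k assume k: "k \<in> T"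
    have "f k 0 \<le> f k (x k)" using mono'[of k 0 "x k"] x k by auto
    then have "f k 0 \<le> v" using x k ys(3) by auto
    moreover have "v \<le> f k (ys k)" using ys k by auto
    ultimately show "\<exists>w. 0 \<le> w \<and> w \<le> ys k \<and> f k w = v"
      using IVT'[of "f k" 0 v "ys k"] ys(1) k contk[of k 0 "ys k"] by auto
  qed
  then obtain w where w: "\<forall>k\<in>T. 0 \<le> w k \<and> w k \<le> ys k \<and> f k (w k) = v" by metis
  have "\<forall>k\<in>T. \<exists>u. w k \<le> u \<and> u \<le> w k + m \<and> f k u = v \<and> (\<forall>z. u < z \<and> z \<le> w k + m \<longrightarrow> v < f k z)"
  proof
    fix k assume k: "k \<in> T"
    define A where "A = {z \<in> {w k..w k + m}. f k z = v}"
    have "closed A" unfolding A_def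
      by (rule continuous_closed_preimage_constant) (use contk[of k "w k" "w k + m"] k w in auto)
    moreover have "bounded A" by (rule bounded_subset[of "{w k..w k+m}"]) (auto simp: A_def)
    ultimately have cA: "compact A" by (simp add: compact_eq_bounded_closed)
    have "w k \<in> A" using w k m0 by (auto simp: A_def)
    then obtain u where u: "u \<in> A" "\<forall>t\<in>A. t \<le> u" using compact_attains_sup[OF cA] by blast
    show "\<exists>u. w k \<le> u \<and> u \<le> w k + m \<and> f k u = v \<and> (\<forall>z. u < z \<and> z \<le> w k + m \<longrightarrow> v < f k z)"
    proof (intro exI conjI allI impI)
      show "w k \<le> u" "u \<le> w k + m" "f k u = v" using u(1) by (auto simp: A_def)
      fix z assume z: "u < z \<and> z \<le> w k + m"
      have "f k u \<le> f k z" using mono'[of k u z] k z \<open>w k \<le> u\<close> w by auto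
      moreover have "z \<notin> A" using u(2) z by force
      then have "f k z \<noteq> v" using z \<open>w k \<le> u\<close> by (auto simp: A_def)
      ultimately show "v < f k z" using \<open>f k u = v\<close> by auto
    qed
  qed
  then obtain u where u: "\<forall>k\<in>T. w k \<le> u k \<and> u k \<le> w k + m \<and> f k (u k) = v \<and> (\<forall>z. u k < z \<and> z \<le> w k + m \<longrightarrow> v < f k z)"
    by metis
  have sw: "(\<Sum>k\<in>T. w k) \<le> m" using ys(2) w sum_mono[of T w ys] by auto
  have unn: "\<forall>k\<in>T. 0 \<le> u k" using u w by force
  show ?thesis
  proof (cases "m \<le> (\<Sum>k\<in>T. u k)")
    case True
    show ?thesis
    proof (cases "(\<Sum>k\<in>T. u k) = (\<Sum>k\<in>T. w k)")
      case True
      then show ?thesis using \<open>m \<le> _\<close> sw w ys(3) by (intro exI[of _ v] exI[of _ w]) auto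
    next
      case False
      have lt: "(\<Sum>k\<in>T. w k) < (\<Sum>k\<in>T. u k)" using False sum_mono[of T w u] u by force
      define t where "t = (m - (\<Sum>k\<in>T. w k)) / ((\<Sum>k\<in>T. u k) - (\<Sum>k\<in>T. w k))"
      have t0: "0 \<le> t" and t1: "t \<le> 1" using lt sw \<open>m \<le> _\<close> by (auto simp: t_def field_simps)
      define y where "y k = w k + t * (u k - w k)" for k
      have "\<forall>k\<in>T. 0 \<le> y k \<and> f k (y k) = v"
      proof
        fix k assume k: "k \<in> T"
        have a: "w k \<le> y k" using t0 u k by (auto simp: y_def)
        have b: "y k \<le> u k"
        proof -
          have "t * (u k - w k) \<le> 1 * (u k - w k)" using t1 u k by (intro mult_right_mono) auto
          then show ?thesis by (simp add: y_def)
        qed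
        have "f k (w k) \<le> f k (y k)" using mono'[of k "w k" "y k"] a w k by auto
        moreover have "f k (y k) \<le> f k (u k)" using mono'[of k "y k" "u k"] a b w k by auto
        ultimately show "0 \<le> y k \<and> f k (y k) = v" using a w u k by force
      qed
      moreover have "(\<Sum>k\<in>T. y k) = m"
      proof -
        have "(\<Sum>k\<in>T. y k) = (\<Sum>k\<in>T. w k) + t * ((\<Sum>k\<in>T. u k) - (\<Sum>k\<in>T. w k))"
          by (simp add: y_def sum.distrib sum_distrib_left sum_subtractf right_diff_distrib)
        also have "\<dots> = m" using lt by (simp add: t_def)
        finally show ?thesis .
      qed
      ultimately show ?thesis using ys(3) by blast
    qed
  next
    case False
    define d where "d = (m - (\<Sum>k\<in>T. u k)) / real (card T)"
    have cT: "0 < real (card T)" using fin ne by (simp add: card_gt_0_iff)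
    have d0: "0 < d" using False cT by (simp add: d_def)
    have dle: "d \<le> m - (\<Sum>k\<in>T. u k)"
    proof -
      have "1 \<le> real (card T)" using fin ne by (simp add: Suc_le_eq card_gt_0_iff)
      then show ?thesis using False unfolding d_def by (simp add: divide_le_eq mult_le_cancel_left1)
    qed
    define y where "y k = u k + d" for k
    have "(\<forall>k\<in>T. 0 \<le> y k)" using unn d0 by (auto simp: y_def)
    moreover have "(\<Sum>k\<in>T. y k) = m" using cT by (simp add: y_def sum.distrib d_def)
    moreover have "\<forall>k\<in>T. v < f k (y k)"
    proof
      fix k assume k: "k \<in> T"
      have "u k \<le> (\<Sum>k\<in>T. u k)" using member_le_sum[of k T u] unn k fin by auto
      then have "y k \<le> w k + m" using dle w k by (auto simp: y_def)
      then show "v < f k (y k)" using u k d0 by (auto simp: y_def)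
    qed
    ultimately show ?thesis using opt by blast
  qed
qed

lemma eq_unique_aux:
  assumes fin: "finite S" and ne: "S \<noteq> {}" and mon: "\<forall>k\<in>S. mono_on {0..} (f k)"
    and p: "eq_profile f S m c" and p': "eq_profile f S m c'" and lt: "c < c'"
  shows False
proof -
  obtain x where x: "\<forall>k\<in>S. x k \<ge> 0" "(\<Sum>k\<in>S. x k) = m" "\<forall>k\<in>S. f k (x k) = c"
    using p by (auto simp: eq_profile_def)
  obtain x' where x': "\<forall>k\<in>S. x' k \<ge> 0" "(\<Sum>k\<in>S. x' k) = m" "\<forall>k\<in>S. f k (x' k) = c'"
    using p' by (auto simp: eq_profile_def)
  have "\<forall>k\<in>S. x k < x' k"
  proof (rule ballI, rule ccontr)
    fix k assume k: "k \<in> S" and "\<not> x k < x' k"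
    then have "x' k \<le> x k" by simp
    moreover have mk: "mono_on {0..} (f k)" using mon k by blast
    ultimately have "f k (x' k) \<le> f k (x k)" by (intro mono_onD[OF mk]) (use x x' k in auto)
    then show False using x x' k lt by auto
  qed
  then have "(\<Sum>k\<in>S. x k) < (\<Sum>k\<in>S. x' k)" using sum_strict_mono[OF fin ne] by blast
  then show False using x x' by simp
qed

lemma eqz_Some_iff:
  assumes fin: "finite S" and ne: "S \<noteq> {}" and mon: "\<forall>k\<in>S. mono_on {0..} (f k)"
  shows "eqz f S m = Some c \<longleftrightarrow> eq_profile f S m c"
proof -
  have u: "c1 = c2" if "eq_profile f S m c1" "eq_profile f S m c2" for c1 c2
    using eq_unique_aux[OF fin ne mon that] eq_unique_aux[OF fin ne mon that(2) that(1)]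
    by (cases "c1 < c2"; cases "c2 < c1") auto
  show ?thesis
  proof
    assume "eqz f S m = Some c"
    then have e: "\<exists>c. eq_profile f S m c" and "c = (THE c. eq_profile f S m c)"
      by (auto simp: eqz_def split: if_splits)
    then show "eq_profile f S m c" using theI'[of "\<lambda>c. eq_profile f S m c"] u by blast
  next
    assume e: "eq_profile f S m c"
    then have "(THE c. eq_profile f S m c) = c" using u by blast
    then show "eqz f S m = Some c" using e by (auto simp: eqz_def)
  qed
qed


theorem mainTheorem17:
  fixes n :: nat and f :: "nat \<Rightarrow> real \<Rightarrow> real" and mu :: "nat set \<Rightarrow> real"
  assumes "n \<ge> 1" and "rsg_game n f mu"
  shows "(\<exists>r::real. max_E n f mu = ereal r)
     \<and> ((\<forall>j\<in>{1..n}. continuous_on {0..} (f j))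
          \<longrightarrow> D_G n f mu \<noteq> {} \<and> h_G n f mu = max_E n f mu)"
proof -
  have monall: "\<forall>j\<in>{1..n}. mono_on {0..} (f j)" and mu0: "\<And>R. R \<noteq> {} \<Longrightarrow> R \<subseteq> {1..n} \<Longrightarrow> mu R \<ge> 0"
    using assms(2) by (auto simp: rsg_game_def)
  define F where "F = {S. S \<noteq> {} \<and> S \<subseteq> {1..n}}"
  define \<Phi> where "\<Phi> S = ext_val (E_G f mu S)" for S
  define mass where "mass S = (\<Sum>R\<in>{R. R \<noteq> {} \<and> R \<subseteq> S}. mu R)" for S
  have EG: "E_G f mu S = eqz f S (mass S)" for S by (simp add: E_G_def mass_def)
  have finF: "finite F" unfolding F_def by (rule finite_subset[of _ "Pow {1..n}"]) auto
  have Fprops: "finite S" "S \<noteq> {}" "\<forall>k\<in>S. mono_on {0..} (f k)" if "S \<in> F" for S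
    using that monall finite_subset[of S "{1..n}"] by (auto simp: F_def)
  have mE: "max_E n f mu = Max (\<Phi> ` F)" by (simp add: max_E_def \<Phi>_def F_def)
  have hG: "h_G n f mu = Max (\<Phi> ` D_G n f mu)" by (simp add: h_G_def \<Phi>_def)
  have oneF: "{1} \<in> F" using assms(1) by (auto simp: F_def)
  have "{R. R \<noteq> {} \<and> R \<subseteq> {1::nat}} = {{1}}" by auto
  then have m1: "mass {1} = mu {1}" by (simp add: mass_def)
  have "eq_profile f {1} (mass {1}) (f 1 (mu {1}))"
    unfolding eq_profile_def m1 using mu0[of "{1}"] assms(1)
    by (intro exI[of _ "\<lambda>_. mu {1}"]) auto
  then have "E_G f mu {1} = Some (f 1 (mu {1}))"
    using eqz_Some_iff[OF Fprops[OF oneF]] EG by simp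
  then have Phi1: "\<Phi> {1} = ereal (f 1 (mu {1}))" by (simp add: \<Phi>_def ext_val_def)
  have notinf: "\<Phi> S \<noteq> \<infinity>" for S by (auto simp: \<Phi>_def ext_val_def split: option.splits)
  have FPne: "\<Phi> ` F \<noteq> {}" using oneF by auto
  have "max_E n f mu \<in> \<Phi> ` F" unfolding mE by (rule Max_in) (use finF FPne in auto)
  then have mEinf: "max_E n f mu \<noteq> \<infinity>" using notinf by (metis image_iff)
  have "\<Phi> {1} \<le> max_E n f mu" unfolding mE by (rule Max_ge) (use finF oneF in auto)
  then have "max_E n f mu \<noteq> -\<infinity>" using Phi1 by auto
  then obtain r where r: "max_E n f mu = ereal r" using mEinf by (cases "max_E n f mu") auto
  have partb: "D_G n f mu \<noteq> {} \<and> h_G n f mu = max_E n f mu"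
    if cont: "\<forall>j\<in>{1..n}. continuous_on {0..} (f j)"
  proof -
    obtain S0 where "S0 \<in> F" "\<Phi> S0 = max_E n f mu" using \<open>max_E n f mu \<in> \<Phi> ` F\<close> by auto
    then obtain S where S: "S \<in> F" "\<Phi> S = max_E n f mu"
      and Smin: "\<And>S'. S' \<in> F \<Longrightarrow> \<Phi> S' = max_E n f mu \<Longrightarrow> card S \<le> card S'"
      using ex_has_least_nat[of "\<lambda>S. S \<in> F \<and> \<Phi> S = max_E n f mu" S0 card] by blast
    note SP = Fprops[OF S(1)]
    have "E_G f mu S = Some r" using S(2) r by (auto simp: \<Phi>_def ext_val_def split: option.splits)
    then have "eq_profile f S (mass S) r" using eqz_Some_iff[OF SP] EG by simp
    then obtain x where x: "\<forall>k\<in>S. x k \<ge> 0" "(\<Sum>k\<in>S. x k) = mass S" "\<forall>k\<in>S. f k (x k) = r"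
      by (auto simp: eq_profile_def)
    have "M_G f mu S = {}"
    proof (rule ccontr)
      assume "M_G f mu S \<noteq> {}"
      then obtain S' where S': "S' \<noteq> {}" "S' \<subseteq> S"
        and bad: "\<And>m. 0 \<le> m \<Longrightarrow> m \<le> (\<Sum>R\<in>{R. R \<subseteq> S \<and> R \<inter> S' \<noteq> {}}. mu R) \<Longrightarrow> eqz f S' m \<noteq> E_G f mu S"
        unfolding M_G_def by blast
      define T where "T = S - S'"
      have finS: "finite S" using SP by blast
      have keyT: "mass T \<le> (\<Sum>k\<in>T. x k)"
      proof (cases "T = {}")
        case True
        then show ?thesis by (simp add: mass_def)
      next
        case False
        show ?thesis
        proof (rule ccontr)
          assume "\<not> mass T \<le> (\<Sum>k\<in>T. x k)"
          then have lt: "(\<Sum>k\<in>T. x k) \<le> mass T" by simp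
          have TF: "T \<in> F" using False S(1) by (auto simp: F_def T_def)
          note TP = Fprops[OF TF]
          have contT: "\<forall>k\<in>T. continuous_on {0..} (f k)" using cont TF by (auto simp: F_def)
          obtain v y where vy: "r \<le> v" "\<forall>k\<in>T. 0 \<le> y k \<and> f k (y k) = v" "(\<Sum>k\<in>T. y k) = mass T"
            using exist_profile[OF TP(1,2) contT TP(3), of x r "mass T"] x lt by (auto simp: T_def)
          have "eq_profile f T (mass T) v" unfolding eq_profile_def using vy by blast
          then have "E_G f mu T = Some v" using eqz_Some_iff[OF TP] EG by simp
          then have PT: "\<Phi> T = ereal v" by (simp add: \<Phi>_def ext_val_def)
          have "\<Phi> T \<le> max_E n f mu" unfolding mE by (rule Max_ge) (use finF TF in auto)
          then have "v = r" using PT r vy(1) by auto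
          then have "card S \<le> card T" using Smin[OF TF] PT r by auto
          moreover have "T \<subset> S" using S' by (auto simp: T_def)
          then have "card T < card S" using finS by (rule psubset_card_mono[rotated])
          ultimately show False by simp
        qed
      qed
      define B1 where "B1 = {R. R \<subseteq> S \<and> R \<inter> S' \<noteq> {}}"
      define B2 where "B2 = {R. R \<noteq> {} \<and> R \<subseteq> T}"
      have "{R. R \<noteq> {} \<and> R \<subseteq> S} = B1 \<union> B2" using S' by (auto simp: B1_def B2_def T_def)
      moreover have "finite B1" "finite B2"
        by (rule finite_subset[of _ "Pow S"], use finS in \<open>auto simp: B1_def B2_def T_def\<close>)+
      moreover have "B1 \<inter> B2 = {}" by (auto simp: B1_def B2_def T_def)
      ultimately have msplit: "mass S = (\<Sum>R\<in>B1. mu R) + mass T"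
        unfolding mass_def B2_def[symmetric] by (simp add: sum.union_disjoint)
      have "S = S' \<union> T" "S' \<inter> T = {}" using S' by (auto simp: T_def)
      then have xsplit: "(\<Sum>k\<in>S. x k) = (\<Sum>k\<in>S'. x k) + (\<Sum>k\<in>T. x k)"
        using finS by (metis finite_Un sum.union_disjoint)
      define \<mu> where "\<mu> = (\<Sum>k\<in>S'. x k)"
      have "0 \<le> \<mu>" unfolding \<mu>_def using x S' by (intro sum_nonneg) blast
      moreover have "\<mu> \<le> (\<Sum>R\<in>B1. mu R)" using msplit xsplit x(2) keyT by (simp add: \<mu>_def)
      moreover have "eqz f S' \<mu> = E_G f mu S"
      proof -
        have S'F: "S' \<in> F" using S' S(1) by (auto simp: F_def)
        have "eq_profile f S' \<mu> r" unfolding eq_profile_def \<mu>_def using x S' by blast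
        then show ?thesis using eqz_Some_iff[OF Fprops[OF S'F]] \<open>E_G f mu S = Some r\<close> by simp
      qed
      ultimately show False using bad unfolding B1_def by blast
    qed
    then have SD: "S \<in> D_G n f mu" using S(1) \<open>E_G f mu S = Some r\<close> by (auto simp: D_G_def F_def)
    have DF: "D_G n f mu \<subseteq> F" by (auto simp: D_G_def F_def)
    have finD: "finite (D_G n f mu)" using finF DF finite_subset by blast
    have "Max (\<Phi> ` D_G n f mu) \<le> Max (\<Phi> ` F)"
      by (rule Max_mono) (use DF finF SD in auto)
    moreover have "\<Phi> S \<le> Max (\<Phi> ` D_G n f mu)" by (rule Max_ge) (use finD SD in auto)
    ultimately show ?thesis using SD hG mE S(2) by auto
  qed
  show ?thesis using r partb by blast
qed

end
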